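(* Let $\mathcal Q_0=\mathbb Q\cap(0,1)$ and consider the real vector space of finitely supported real functions on $\mathcal Q_0$ with unit vectors $e_q$, $q\in\mathcal Q_0$. Define linear operators $D_2,D_3$ on it by $D_2e_q=e_{q/2}+e_{(q+1)/2}$ and $D_3e_q=e_{q/3}+e_{(q+1)/3}+e_{(q+2)/3}$. Then for all $l,m\in\mathbb N$ the vector $D_2^lD_3^me_{1/6}$ is a sum of $2^l3^m$ pairwise different unit vectors $e_q$, and the supports of $D_2^lD_3^me_{1/6}$ and $D_2^{l_1}D_3^{m_1}e_{1/6}$ are disjoint whenever $(l,m)\ne(l_1,m_1)$. *)

theory Defs
  imports Complex_Main
begin

text \<open>Q0 = rationals in (0,1).  Vectors of the space of finitely supported real
functions on Q0 are represented as functions rat => real (finitely supported, support in Q0).\<close>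

definition Q0 :: "rat set" where
  "Q0 = {q. 0 < q \<and> q < 1}"

definition fsupp :: "(rat \<Rightarrow> real) \<Rightarrow> rat set" where
  "fsupp v = {q. v q \<noteq> 0}"

definition FinSupp :: "(rat \<Rightarrow> real) set" where
  "FinSupp = {v. finite (fsupp v) \<and> fsupp v \<subseteq> Q0}"

definition unitvec :: "rat \<Rightarrow> rat \<Rightarrow> real" where
  "unitvec q = (\<lambda>p. if p = q then 1 else 0)"

definition D2 :: "(rat \<Rightarrow> real) \<Rightarrow> rat \<Rightarrow> real" where
  "D2 v = (\<lambda>p. \<Sum>q\<in>fsupp v. v q * (unitvec (q/2) p + unitvec ((q+1)/2) p))"

definition D3 :: "(rat \<Rightarrow> real) \<Rightarrow> rat \<Rightarrow> real" where
  "D3 v = (\<lambda>p. \<Sum>q\<in>fsupp v. v q *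
     (unitvec (q/3) p + unitvec ((q+1)/3) p + unitvec ((q+2)/3) p))"

end

theory Submission
  imports Defs
begin

definition ind :: "rat set \<Rightarrow> rat \<Rightarrow> real" where
  "ind S = (\<lambda>p. if p \<in> S then 1 else 0)"

lemma fsupp_ind: "fsupp (ind S) = S" by (auto simp: fsupp_def ind_def)

lemma sum_unitvec: "finite A \<Longrightarrow> (\<Sum>x\<in>A. unitvec x p) = ind A p"
  unfolding unitvec_def ind_def by (simp add: sum.delta')

lemma sum_unitvec_img:
  assumes "finite S" "inj_on h S"
  shows "(\<Sum>q\<in>S. unitvec (h q) p) = ind (h`S) p"
  using sum.reindex[OF assms(2), of "\<lambda>x. unitvec x p"] sum_unitvec[of "h`S" p] assms by simp

lemma ind_Un: "A \<inter> B = {} \<Longrightarrow> ind A p + ind B p = ind (A\<union>B) p" by (auto simp: ind_def)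

lemma sep: assumes "S \<subseteq> Q0" "x \<in> S" "y \<in> S" "x = y + b" "b \<ge> 1" shows False
proof -
  have "x < 1" "0 < y" using assms(1-3) by (auto simp: Q0_def)
  then show False using assms(4,5) by linarith
qed

lemma D2_ind:
  assumes "finite S" "S \<subseteq> Q0"
  shows "D2 (ind S) = ind ((\<lambda>q. q/2)`S \<union> (\<lambda>q. (q+1)/2)`S)"
proof
  fix p
  have "D2 (ind S) p = (\<Sum>q\<in>S. unitvec (q/2) p + unitvec ((q+1)/2) p)"
    unfolding D2_def fsupp_ind by (rule sum.cong) (auto simp: ind_def)
  also have "\<dots> = ind ((\<lambda>q. q/2)`S) p + ind ((\<lambda>q. (q+1)/2)`S) p"
    using sum_unitvec_img[OF assms(1), of "\<lambda>q. q/2" p] sum_unitvec_img[OF assms(1), of "\<lambda>q. (q+1)/2" p]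
    by (simp add: sum.distrib inj_on_def)
  also have "\<dots> = ind ((\<lambda>q. q/2)`S \<union> (\<lambda>q. (q+1)/2)`S) p"
  proof (rule ind_Un)
    show "(\<lambda>q. q/2)`S \<inter> (\<lambda>q. (q+1)/2)`S = {}" using assms(2) by (auto simp: field_simps Q0_def dest!: subsetD[OF assms(2)])
  qed
  finally show "D2 (ind S) p = ind ((\<lambda>q. q/2)`S \<union> (\<lambda>q. (q+1)/2)`S) p" .
qed

lemma D3_ind:
  assumes "finite S" "S \<subseteq> Q0"
  shows "D3 (ind S) = ind ((\<lambda>q. q/3)`S \<union> (\<lambda>q. (q+1)/3)`S \<union> (\<lambda>q. (q+2)/3)`S)"
proof
  fix p
  have "D3 (ind S) p = (\<Sum>q\<in>S. unitvec (q/3) p + unitvec ((q+1)/3) p + unitvec ((q+2)/3) p)"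
    unfolding D3_def fsupp_ind by (rule sum.cong) (auto simp: ind_def)
  also have "\<dots> = ind ((\<lambda>q. q/3)`S) p + ind ((\<lambda>q. (q+1)/3)`S) p + ind ((\<lambda>q. (q+2)/3)`S) p"
    using sum_unitvec_img[OF assms(1), of "\<lambda>q. q/3" p] sum_unitvec_img[OF assms(1), of "\<lambda>q. (q+1)/3" p]
      sum_unitvec_img[OF assms(1), of "\<lambda>q. (q+2)/3" p]
    by (simp add: sum.distrib inj_on_def)
  also have "\<dots> = ind ((\<lambda>q. q/3)`S \<union> (\<lambda>q. (q+1)/3)`S) p + ind ((\<lambda>q. (q+2)/3)`S) p"
  proof -
    have "(\<lambda>q. q/3)`S \<inter> (\<lambda>q. (q+1)/3)`S = {}" using assms(2) by (auto simp: field_simps Q0_def dest!: subsetD[OF assms(2)])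
    then show ?thesis using ind_Un by metis
  qed
  also have "\<dots> = ind ((\<lambda>q. q/3)`S \<union> (\<lambda>q. (q+1)/3)`S \<union> (\<lambda>q. (q+2)/3)`S) p"
  proof (rule ind_Un)
    show "((\<lambda>q. q/3)`S \<union> (\<lambda>q. (q+1)/3)`S) \<inter> (\<lambda>q. (q+2)/3)`S = {}" using assms(2) by (auto simp: field_simps Q0_def dest!: subsetD[OF assms(2)])
  qed
  finally show "D3 (ind S) p = ind ((\<lambda>q. q/3)`S \<union> (\<lambda>q. (q+1)/3)`S \<union> (\<lambda>q. (q+2)/3)`S) p" .
qed

primrec S3 :: "nat \<Rightarrow> rat set" where
  "S3 0 = {1/6}"
| "S3 (Suc m) = (\<lambda>q. q/3)`S3 m \<union> (\<lambda>q. (q+1)/3)`S3 m \<union> (\<lambda>q. (q+2)/3)`S3 m"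

primrec S2 :: "nat \<Rightarrow> nat \<Rightarrow> rat set" where
  "S2 0 m = S3 m"
| "S2 (Suc l) m = (\<lambda>q. q/2)`S2 l m \<union> (\<lambda>q. (q+1)/2)`S2 l m"

lemma S3_props: "finite (S3 m) \<and> S3 m \<subseteq> Q0 \<and> card (S3 m) = 3^m \<and>
   (D3^^m) (unitvec (1/6)) = ind (S3 m)"
proof (induction m)
  case 0
  then show ?case by (auto simp: Q0_def unitvec_def ind_def fun_eq_iff)
next
  case (Suc m)
  let ?S = "S3 m"
  have f: "finite ?S" and q: "?S \<subseteq> Q0" using Suc by auto
  have d1: "(\<lambda>q. q/3)`?S \<inter> (\<lambda>q. (q+1)/3)`?S = {}" using q by (auto simp: field_simps Q0_def dest!: subsetD[OF q])
  have d2: "((\<lambda>q. q/3)`?S \<union> (\<lambda>q. (q+1)/3)`?S) \<inter> (\<lambda>q. (q+2)/3)`?S = {}" using q by (auto simp: field_simps Q0_def dest!: subsetD[OF q])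
  have c: "card (S3 (Suc m)) = 3 * card ?S"
    using card_Un_disjoint[OF _ _ d2] card_Un_disjoint[OF _ _ d1] f
      card_image[of "\<lambda>q. q/3" ?S] card_image[of "\<lambda>q. (q+1)/3" ?S] card_image[of "\<lambda>q. (q+2)/3" ?S]
    by (simp add: inj_on_def)
  have qq: "S3 (Suc m) \<subseteq> Q0" using q by (auto simp: Q0_def)
  show ?case using Suc c qq D3_ind[OF f q] by simp
qed

lemma S2_props: "finite (S2 l m) \<and> S2 l m \<subseteq> Q0 \<and> card (S2 l m) = 2^l * 3^m \<and>
   (D2^^l) ((D3^^m) (unitvec (1/6))) = ind (S2 l m)"
proof (induction l)
  case 0
  then show ?case using S3_props by simp
next
  case (Suc l)
  let ?S = "S2 l m"
  have f: "finite ?S" and q: "?S \<subseteq> Q0" using Suc by auto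
  have d1: "(\<lambda>q. q/2)`?S \<inter> (\<lambda>q. (q+1)/2)`?S = {}" using q by (auto simp: field_simps Q0_def dest!: subsetD[OF q])
  have c: "card (S2 (Suc l) m) = 2 * card ?S"
    using card_Un_disjoint[OF _ _ d1] f
      card_image[of "\<lambda>q. q/2" ?S] card_image[of "\<lambda>q. (q+1)/2" ?S]
    by (simp add: inj_on_def)
  have qq: "S2 (Suc l) m \<subseteq> Q0" using q by (auto simp: Q0_def)
  show ?case using Suc c qq D2_ind[OF f q] by simp
qed

lemma step3:
  fixes q p :: rat
  assumes "q*(6*3^m) = of_int n" "n mod 6 = 1" "p = (q + of_int k)/3"
  shows "\<exists>n'::int. p*(6*3^Suc m) = of_int n' \<and> n' mod 6 = 1"
proof (rule exI[of _ "n + 6*(k*3^m)"], rule conjI)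
  have "p*(6*3^Suc m) = q*(6*3^m) + of_int k * (6*3^m)" by (simp add: assms(3) field_simps)
  then show "p*(6*3^Suc m) = of_int (n + 6*(k*3^m))" using assms(1) by simp
  show "(n + 6*(k*3^m)) mod 6 = 1" using assms(2) by simp
qed

lemma S3_mem: "p \<in> S3 m \<Longrightarrow> \<exists>n::int. p * (6*3^m) = of_int n \<and> n mod 6 = 1"
proof (induction m arbitrary: p)
  case 0
  then show ?case by auto
next
  case (Suc m)
  from Suc.prems consider (a) q where "q\<in>S3 m" "p = (q + of_int 0)/3"
    | (b) q where "q\<in>S3 m" "p = (q + of_int 1)/3"
    | (c) q where "q\<in>S3 m" "p = (q + of_int 2)/3" by auto
  then show ?case
  proof cases
    case a then show ?thesis using Suc.IH step3 by blast
  next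
    case b then show ?thesis using Suc.IH step3 by blast
  next
    case c then show ?thesis using Suc.IH step3 by blast
  qed
qed

lemma step2:
  fixes q p :: rat
  assumes "q*(6*2^l*3^m) = of_int n" "n mod 6 = 1" "p = (q + of_int k)/2"
  shows "\<exists>n'::int. p*(6*2^Suc l*3^m) = of_int n' \<and> n' mod 6 = 1"
proof (rule exI[of _ "n + 6*(k*2^l*3^m)"], rule conjI)
  have "p*(6*2^Suc l*3^m) = q*(6*2^l*3^m) + of_int k * (6*2^l*3^m)" by (simp add: assms(3) field_simps)
  then show "p*(6*2^Suc l*3^m) = of_int (n + 6*(k*2^l*3^m))" using assms(1) by simp
  show "(n + 6*(k*2^l*3^m)) mod 6 = 1" using assms(2) by simp
qed

lemma S2_mem: "p \<in> S2 l m \<Longrightarrow> \<exists>n::int. p * (6*2^l*3^m) = of_int n \<and> n mod 6 = 1"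
proof (induction l arbitrary: p)
  case 0
  then show ?case using S3_mem by simp
next
  case (Suc l)
  from Suc.prems consider (a) q where "q\<in>S2 l m" "p = (q + of_int 0)/2"
    | (b) q where "q\<in>S2 l m" "p = (q + of_int 1)/2" by auto
  then show ?case
  proof cases
    case a then show ?thesis using Suc.IH step2 by blast
  next
    case b then show ?thesis using Suc.IH step2 by blast
  qed
qed

lemma kl1:
  fixes n n' :: int
  assumes "odd n'" "l < l'"
  shows "n*(2^l'*3^m') \<noteq> n'*(2^l*3^m)"
proof
  assume eq: "n*(2^l'*3^m') = n'*(2^l*3^m)"
  obtain a where a: "l' = Suc (l + a)" using assms(2) less_imp_Suc_add by blast
  have p: "(2::int)^l' = 2^l * (2 * 2^a)" unfolding a by (simp add: power_add)
  have "2^l * (n*(2*2^a*3^m')) = 2^l * (n'*3^m)" using eq unfolding p by (simp only: ac_simps)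
  then have e2: "n*(2*2^a*3^m') = n'*3^m" by simp
  have "even (n*(2*2^a*3^m'))" by simp
  then have "even (n'*3^m)" unfolding e2 .
  moreover have "odd (n'*3^m)" using assms(1) by simp
  ultimately show False by blast
qed
lemma kl2:
  fixes n n' :: int
  assumes "n' mod 3 \<noteq> 0" "m < m'"
  shows "n*(2^l*3^m') \<noteq> n'*(2^l*3^m)"
proof
  assume eq: "n*(2^l*3^m') = n'*(2^l*3^m)"
  obtain c where c: "m' = Suc (m + c)" using assms(2) less_imp_Suc_add by blast
  have p: "(3::int)^m' = 3^m * (3 * 3^c)" unfolding c by (simp add: power_add)
  have "((2::int)^l*3^m) * (n*(3*3^c)) = (2^l*3^m) * n'" using eq unfolding p by (simp only: ac_simps)
  then have "n*(3*3^c) = n'" by simp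
  then have "n' = 3 * (n*3^c)" by (simp only: ac_simps)
  then have "n' mod 3 = 0" by simp
  then show False using assms(1) by simp
qed

lemma key:
  fixes n n' :: int
  assumes "n mod 6 = 1" "n' mod 6 = 1" "n*(2^l'*3^m') = n'*(2^l*3^m)"
  shows "l = l' \<and> m = m'"
proof -
  have o: "odd n" "odd n'" using assms(1,2) by presburger+
  have t: "n mod 3 \<noteq> 0" "n' mod 3 \<noteq> 0" using assms(1,2) by presburger+
  have l: "l = l'"
  proof (rule ccontr)
    assume "l \<noteq> l'"
    then consider "l < l'" | "l' < l" by linarith
    then show False
    proof cases
      case 1 then show False using kl1[OF o(2), of l l' n m' m] assms(3) by blast
    next
      case 2 then show False using kl1[OF o(1), of l' l n' m m'] assms(3)[symmetric] by blast
    qed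
  qed
  have e: "n*(2^l*3^m') = n'*(2^l*3^m)" using assms(3) l by simp
  have m: "m = m'"
  proof (rule ccontr)
    assume "m \<noteq> m'"
    then consider "m < m'" | "m' < m" by linarith
    then show False
    proof cases
      case 1 then show False using kl2[OF t(2), of m m' n l] e by blast
    next
      case 2 then show False using kl2[OF t(1), of m' m n' l] e[symmetric] by blast
    qed
  qed
  show ?thesis using l m by simp
qed

lemma cross: "(p::rat)*A = x \<Longrightarrow> p*B = y \<Longrightarrow> x*B = y*A"
  by (auto simp: mult_ac)

theorem lemma3p2:
  shows "(\<forall>l m :: nat. \<exists>S. finite S \<and> S \<subseteq> Q0 \<and> card S = 2 ^ l * 3 ^ m \<and>
            (D2 ^^ l) ((D3 ^^ m) (unitvec (1/6))) = (\<lambda>p. \<Sum>q\<in>S. unitvec q p))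
       \<and> (\<forall>l m l1 m1 :: nat. (l, m) \<noteq> (l1, m1) \<longrightarrow>
            fsupp ((D2 ^^ l) ((D3 ^^ m) (unitvec (1/6)))) \<inter>
            fsupp ((D2 ^^ l1) ((D3 ^^ m1) (unitvec (1/6)))) = {})"
proof (intro conjI allI impI)
  fix l m :: nat
  show "\<exists>S. finite S \<and> S \<subseteq> Q0 \<and> card S = 2 ^ l * 3 ^ m \<and>
            (D2 ^^ l) ((D3 ^^ m) (unitvec (1/6))) = (\<lambda>p. \<Sum>q\<in>S. unitvec q p)"
    using S2_props[of l m] by (intro exI[of _ "S2 l m"]) (auto simp: fun_eq_iff sum_unitvec)
next
  fix l m l1 m1 :: nat
  assume ne: "(l, m) \<noteq> (l1, m1)"
  have "S2 l m \<inter> S2 l1 m1 = {}"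
  proof (rule ccontr)
    assume "S2 l m \<inter> S2 l1 m1 \<noteq> {}"
    then obtain p where p: "p \<in> S2 l m" "p \<in> S2 l1 m1" by blast
    obtain n where n: "p * (6*2^l*3^m) = of_int n" "n mod 6 = 1" using S2_mem[OF p(1)] by blast
    obtain n' where n': "p * (6*2^l1*3^m1) = of_int n'" "n' mod 6 = 1" using S2_mem[OF p(2)] by blast
    have "of_int n * (6*2^l1*3^m1) = of_int n' * (6*2^l*3^m :: rat)"
      using cross[OF n(1) n'(1)] .
    then have "of_int (n*(6*2^l1*3^m1)) = (of_int (n'*(6*2^l*3^m)) :: rat)"
      by (simp only: of_int_mult of_int_power of_int_numeral)
    then have "n*(6*2^l1*3^m1) = n'*(6*2^l*3^m)" by (simp only: of_int_eq_iff)
    then have "6*(n*(2^l1*3^m1)) = 6*(n'*(2^l*3^m))" by (simp only: mult_ac)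
    then have "n*(2^l1*3^m1) = n'*(2^l*3^m)" by (rule mult_left_cancel[THEN iffD1, rotated]) simp
    then have "l = l1 \<and> m = m1" using key n(2) n'(2) by blast
    then show False using ne by simp
  qed
  then show "fsupp ((D2 ^^ l) ((D3 ^^ m) (unitvec (1/6)))) \<inter>
            fsupp ((D2 ^^ l1) ((D3 ^^ m1) (unitvec (1/6)))) = {}"
    using S2_props[of l m] S2_props[of l1 m1] by (simp add: fsupp_ind)
qed

end
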